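(* Suppose that (i) $K:\mathbb R^p\rightrightarrows\mathbb R^n$ is affine, and (ii) $f:\mathbb R^p\times\mathbb R^n\times\mathbb R^n\to\mathbb R^m$ is $C$-concave. Then the function $\mathfrak m=\nu+\mu$ is convex on $\mathbb R^p\times\mathbb R^n$ and the solution mapping $E$ is convex, in the sense that $\operatorname{gph}E$ is a convex subset of $\mathbb R^p\times\mathbb R^n$.
   Context: $C\subset\mathbb R^m$ nontrivial closed convex pointed cone; $K$ has closed graph and nonempty values (standing assumption). VEP($\xi$): find $x\in K(\xi)$ with $f(\xi,x,z)\in C$ for all $z\in K(\xi)$; $E(\xi)$ its solution set. $\nu(\xi,x)=\sup_{z\in K(\xi)}\operatorname{dist}(f(\xi,x,z),C)$, $\mu(\xi,x)=\operatorname{dist}(x,K(\xi))$, $\mathfrak m=\nu+\mu$. $g$ is $C$-concave if $g(tx_1+(1-t)x_2)-tg(x_1)-(1-t)g(x_2)\in C$ for all $x_1,x_2$, $t\in[0,1]$. A set-valued map $F$ is affine if $F(tx_1+(1-t)x_2)=tF(x_1)+(1-t)F(x_2)$ for all $x_1,x_2$, $t\in[0,1]$. *)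

theory Defs
  imports "HOL-Analysis.Analysis"
begin

definition msum :: "'a::real_vector set \<Rightarrow> 'a set \<Rightarrow> 'a set" where
  "msum A B = {a + b | a b. a \<in> A \<and> b \<in> B}"

definition affine_setmap :: "('a::real_vector \<Rightarrow> 'b::real_vector set) \<Rightarrow> bool" where
  "affine_setmap F \<longleftrightarrow> (\<forall>x1 x2 t. 0 \<le> t \<and> t \<le> 1 \<longrightarrow>
     F (t *\<^sub>R x1 + (1 - t) *\<^sub>R x2) = msum ((\<lambda>y. t *\<^sub>R y) ` F x1) ((\<lambda>y. (1 - t) *\<^sub>R y) ` F x2))"

definition C_concave :: "'b::real_vector set \<Rightarrow> ('a::real_vector \<Rightarrow> 'b) \<Rightarrow> bool" where
  "C_concave C g \<longleftrightarrow> (\<forall>x1 x2 t. 0 \<le> t \<and> t \<le> 1 \<longrightarrow>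
     g (t *\<^sub>R x1 + (1 - t) *\<^sub>R x2) - t *\<^sub>R g x1 - (1 - t) *\<^sub>R g x2 \<in> C)"

definition VEP_sol :: "('p \<Rightarrow> 'n set) \<Rightarrow> ('p \<Rightarrow> 'n \<Rightarrow> 'n \<Rightarrow> 'm) \<Rightarrow> 'm set \<Rightarrow> 'p \<Rightarrow> 'n set" where
  "VEP_sol K f C xi = {x \<in> K xi. \<forall>z \<in> K xi. f xi x z \<in> C}"

definition gap_nu :: "('p \<Rightarrow> 'n set) \<Rightarrow> ('p \<Rightarrow> 'n \<Rightarrow> 'n \<Rightarrow> 'm::metric_space) \<Rightarrow> 'm set \<Rightarrow> 'p \<Rightarrow> 'n \<Rightarrow> ereal" where
  "gap_nu K f C xi x = (SUP z \<in> K xi. ereal (infdist (f xi x z) C))"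

definition gap_mu :: "('p \<Rightarrow> 'n::metric_space set) \<Rightarrow> 'p \<Rightarrow> 'n \<Rightarrow> ereal" where
  "gap_mu K xi x = ereal (infdist x (K xi))"

definition convex_ereal_fun :: "('a::real_vector \<Rightarrow> ereal) \<Rightarrow> bool" where
  "convex_ereal_fun g \<longleftrightarrow> (\<forall>u v t. 0 < t \<and> t < 1 \<longrightarrow>
     g (t *\<^sub>R u + (1 - t) *\<^sub>R v) \<le> ereal t * g u + ereal (1 - t) * g v)"

end

theory Submission
  imports Defs
begin

lemma infdist_add_cone:
  fixes C :: "'m::real_normed_vector set"
  assumes "\<And>a b. a \<in> C \<Longrightarrow> b \<in> C \<Longrightarrow> a + b \<in> C" "c \<in> C" "C \<noteq> {}"
  shows "infdist (y + c) C \<le> infdist y C"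
proof -
  have "\<forall>a\<in>C. infdist (y + c) C \<le> dist y a"
  proof
    fix a assume a: "a \<in> C"
    have "infdist (y + c) C \<le> dist (y + c) (a + c)" using assms a by (intro infdist_le) auto
    also have "\<dots> = dist y a" by (simp add: dist_norm)
    finally show "infdist (y + c) C \<le> dist y a" .
  qed
  then show ?thesis unfolding infdist_def using assms(3)
    by (auto intro!: cINF_greatest)
qed

lemma infdist_convex_comb:
  fixes C :: "'m::euclidean_space set"
  assumes "convex C" "closed C" "C \<noteq> {}" "0 \<le> t" "t \<le> 1"
  shows "infdist (t *\<^sub>R a + (1 - t) *\<^sub>R b) C \<le> t * infdist a C + (1 - t) * infdist b C"
proof -
  obtain ca where ca: "ca \<in> C" "infdist a C = dist a ca" using infdist_attains_inf[OF assms(2,3)] by blast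
  obtain cb where cb: "cb \<in> C" "infdist b C = dist b cb" using infdist_attains_inf[OF assms(2,3)] by blast
  have m: "t *\<^sub>R ca + (1 - t) *\<^sub>R cb \<in> C" using assms ca cb by (intro convexD) auto
  have "infdist (t *\<^sub>R a + (1 - t) *\<^sub>R b) C \<le> dist (t *\<^sub>R a + (1 - t) *\<^sub>R b) (t *\<^sub>R ca + (1 - t) *\<^sub>R cb)"
    using m by (rule infdist_le)
  also have "\<dots> = norm (t *\<^sub>R (a - ca) + (1 - t) *\<^sub>R (b - cb))"
    by (simp add: dist_norm algebra_simps)
  also have "\<dots> \<le> norm (t *\<^sub>R (a - ca)) + norm ((1 - t) *\<^sub>R (b - cb))" by (rule norm_triangle_ineq)
  also have "\<dots> = t * dist a ca + (1 - t) * dist b cb" using assms by (simp add: dist_norm)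
  finally show ?thesis using ca cb by simp
qed

theorem mainTheorem6:
  fixes C :: "'m::euclidean_space set"
    and K :: "'p::euclidean_space \<Rightarrow> 'n::euclidean_space set"
    and f :: "'p \<Rightarrow> 'n \<Rightarrow> 'n \<Rightarrow> 'm"
  assumes C_closed: "closed C" and C_convex: "convex C" and C_cone: "cone C"
    and C_pointed: "C \<inter> uminus ` C = {0}" and C_nontrivial: "C \<noteq> {0}"
    and K_closed_graph: "closed {(xi, x). x \<in> K xi}"
    and K_nonempty: "\<And>xi. K xi \<noteq> {}"
    and K_affine: "affine_setmap K"
    and f_concave: "C_concave C (\<lambda>(xi, x, z). f xi x z)"
  shows "convex_ereal_fun (\<lambda>(xi, x). gap_nu K f C xi x + gap_mu K xi x)
    \<and> convex {(xi, x). x \<in> VEP_sol K f C xi}"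
proof -
  have C0: "0 \<in> C" using C_pointed by blast
  hence Cne: "C \<noteq> {}" by blast
  have Cadd: "a + b \<in> C" if "a \<in> C" "b \<in> C" for a b
  proof -
    have "(1/2) *\<^sub>R a + (1 - 1/2) *\<^sub>R b \<in> C" using that C_convex by (intro convexD) auto
    hence "(2::real) *\<^sub>R ((1/2) *\<^sub>R a + (1 - 1/2) *\<^sub>R b) \<in> C" using C_cone unfolding cone_def by auto
    thus ?thesis by (simp add: algebra_simps)
  qed
  have Kcl: "closed (K xi)" for xi
  proof -
    have "closed ((\<lambda>x. (xi, x)) -` {(xi, x). x \<in> K xi})"
      by (rule continuous_closed_vimage[OF K_closed_graph]) (intro continuous_intros)
    thus ?thesis by simp
  qed
  have Kdec: "\<exists>z1\<in>K xi1. \<exists>z2\<in>K xi2. z = t *\<^sub>R z1 + (1 - t) *\<^sub>R z2"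
    if "0 \<le> t" "t \<le> 1" "z \<in> K (t *\<^sub>R xi1 + (1 - t) *\<^sub>R xi2)" for t xi1 xi2 z
    using that K_affine unfolding affine_setmap_def msum_def by auto
  have Kcomb: "t *\<^sub>R z1 + (1 - t) *\<^sub>R z2 \<in> K (t *\<^sub>R xi1 + (1 - t) *\<^sub>R xi2)"
    if "0 \<le> t" "t \<le> 1" "z1 \<in> K xi1" "z2 \<in> K xi2" for t xi1 xi2 z1 z2
    using that K_affine unfolding affine_setmap_def msum_def by auto
  have fc: "f (t *\<^sub>R xi1 + (1 - t) *\<^sub>R xi2) (t *\<^sub>R x1 + (1 - t) *\<^sub>R x2) (t *\<^sub>R z1 + (1 - t) *\<^sub>R z2)
       - t *\<^sub>R f xi1 x1 z1 - (1 - t) *\<^sub>R f xi2 x2 z2 \<in> C"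
    if "0 \<le> t" "t \<le> 1" for t xi1 xi2 x1 x2 z1 z2
    using f_concave that unfolding C_concave_def
    by (drule_tac x="(xi1, x1, z1)" in spec, drule_tac x="(xi2, x2, z2)" in spec,
        drule_tac x=t in spec) simp
  have fin: "f (t *\<^sub>R xi1 + (1 - t) *\<^sub>R xi2) (t *\<^sub>R x1 + (1 - t) *\<^sub>R x2) (t *\<^sub>R z1 + (1 - t) *\<^sub>R z2)
      = (t *\<^sub>R f xi1 x1 z1 + (1 - t) *\<^sub>R f xi2 x2 z2) + c \<and> c \<in> C"
    if "0 \<le> t" "t \<le> 1" "c = f (t *\<^sub>R xi1 + (1 - t) *\<^sub>R xi2) (t *\<^sub>R x1 + (1 - t) *\<^sub>R x2) (t *\<^sub>R z1 + (1 - t) *\<^sub>R z2)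
       - t *\<^sub>R f xi1 x1 z1 - (1 - t) *\<^sub>R f xi2 x2 z2" for t xi1 xi2 x1 x2 z1 z2 c
  proof
    show "c \<in> C" using fc[OF that(1,2), of xi1 xi2 x1 x2 z1 z2] that(3) by simp
  qed (use that(3) in \<open>simp add: algebra_simps\<close>)
  have nu: "gap_nu K f C (t *\<^sub>R xi1 + (1 - t) *\<^sub>R xi2) (t *\<^sub>R x1 + (1 - t) *\<^sub>R x2)
      \<le> ereal t * gap_nu K f C xi1 x1 + ereal (1 - t) * gap_nu K f C xi2 x2"
    if t: "0 \<le> t" "t \<le> 1" for t xi1 xi2 x1 x2
    unfolding gap_nu_def
  proof (rule SUP_least)
    fix z assume "z \<in> K (t *\<^sub>R xi1 + (1 - t) *\<^sub>R xi2)"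
    then obtain z1 z2 where z: "z1 \<in> K xi1" "z2 \<in> K xi2" "z = t *\<^sub>R z1 + (1 - t) *\<^sub>R z2"
      using Kdec t by blast
    define c where "c = f (t *\<^sub>R xi1 + (1 - t) *\<^sub>R xi2) (t *\<^sub>R x1 + (1 - t) *\<^sub>R x2) (t *\<^sub>R z1 + (1 - t) *\<^sub>R z2)
       - t *\<^sub>R f xi1 x1 z1 - (1 - t) *\<^sub>R f xi2 x2 z2"
    note e = fin[OF t c_def]
    have "infdist (f (t *\<^sub>R xi1 + (1 - t) *\<^sub>R xi2) (t *\<^sub>R x1 + (1 - t) *\<^sub>R x2) z) C
        \<le> infdist (t *\<^sub>R f xi1 x1 z1 + (1 - t) *\<^sub>R f xi2 x2 z2) C"
      unfolding z(3) e[THEN conjunct1] using e Cadd Cne by (intro infdist_add_cone) auto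
    also have "\<dots> \<le> t * infdist (f xi1 x1 z1) C + (1 - t) * infdist (f xi2 x2 z2) C"
      using infdist_convex_comb[OF C_convex C_closed Cne t] .
    finally have "ereal (infdist (f (t *\<^sub>R xi1 + (1 - t) *\<^sub>R xi2) (t *\<^sub>R x1 + (1 - t) *\<^sub>R x2) z) C)
       \<le> ereal t * ereal (infdist (f xi1 x1 z1) C) + ereal (1 - t) * ereal (infdist (f xi2 x2 z2) C)"
      by simp
    also have "\<dots> \<le> ereal t * (SUP z\<in>K xi1. ereal (infdist (f xi1 x1 z) C))
        + ereal (1 - t) * (SUP z\<in>K xi2. ereal (infdist (f xi2 x2 z) C))"
      using t z by (intro add_mono ereal_mult_left_mono SUP_upper) auto
    finally show "ereal (infdist (f (t *\<^sub>R xi1 + (1 - t) *\<^sub>R xi2) (t *\<^sub>R x1 + (1 - t) *\<^sub>R x2) z) C)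
       \<le> ereal t * (SUP z\<in>K xi1. ereal (infdist (f xi1 x1 z) C))
        + ereal (1 - t) * (SUP z\<in>K xi2. ereal (infdist (f xi2 x2 z) C))" .
  qed
  have mu: "infdist (t *\<^sub>R x1 + (1 - t) *\<^sub>R x2) (K (t *\<^sub>R xi1 + (1 - t) *\<^sub>R xi2))
      \<le> t * infdist x1 (K xi1) + (1 - t) * infdist x2 (K xi2)"
    if t: "0 \<le> t" "t \<le> 1" for t xi1 xi2 x1 x2
  proof -
    obtain a where a: "a \<in> K xi1" "infdist x1 (K xi1) = dist x1 a"
      using infdist_attains_inf[OF Kcl K_nonempty] by blast
    obtain b where b: "b \<in> K xi2" "infdist x2 (K xi2) = dist x2 b"
      using infdist_attains_inf[OF Kcl K_nonempty] by blast
    have "infdist (t *\<^sub>R x1 + (1 - t) *\<^sub>R x2) (K (t *\<^sub>R xi1 + (1 - t) *\<^sub>R xi2))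
        \<le> dist (t *\<^sub>R x1 + (1 - t) *\<^sub>R x2) (t *\<^sub>R a + (1 - t) *\<^sub>R b)"
      using Kcomb[OF t a(1) b(1)] by (rule infdist_le)
    also have "\<dots> = norm (t *\<^sub>R (x1 - a) + (1 - t) *\<^sub>R (x2 - b))"
      by (simp add: dist_norm algebra_simps)
    also have "\<dots> \<le> norm (t *\<^sub>R (x1 - a)) + norm ((1 - t) *\<^sub>R (x2 - b))" by (rule norm_triangle_ineq)
    also have "\<dots> = t * dist x1 a + (1 - t) * dist x2 b" using t by (simp add: dist_norm)
    finally show ?thesis using a b by simp
  qed
  have nuge: "0 \<le> gap_nu K f C xi x" for xi x
  proof -
    obtain z where "z \<in> K xi" using K_nonempty by blast
    hence "ereal (infdist (f xi x z) C) \<le> gap_nu K f C xi x" unfolding gap_nu_def by (rule SUP_upper)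
    moreover have "0 \<le> ereal (infdist (f xi x z) C)" by (simp add: infdist_nonneg)
    ultimately show ?thesis by (rule order_trans[rotated])
  qed
  have muge: "0 \<le> gap_mu K xi x" for xi x by (simp add: gap_mu_def infdist_nonneg)
  have part1: "convex_ereal_fun (\<lambda>(xi, x). gap_nu K f C xi x + gap_mu K xi x)"
    unfolding convex_ereal_fun_def
  proof (intro allI impI)
    fix u v :: "'p \<times> 'n" and t :: real assume t: "0 < t \<and> t < 1"
    obtain xi1 x1 where u: "u = (xi1, x1)" by (cases u)
    obtain xi2 x2 where v: "v = (xi2, x2)" by (cases v)
    have t': "0 \<le> t" "t \<le> 1" using t by auto
    have "gap_nu K f C (t *\<^sub>R xi1 + (1 - t) *\<^sub>R xi2) (t *\<^sub>R x1 + (1 - t) *\<^sub>R x2)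
        + gap_mu K (t *\<^sub>R xi1 + (1 - t) *\<^sub>R xi2) (t *\<^sub>R x1 + (1 - t) *\<^sub>R x2)
      \<le> (ereal t * gap_nu K f C xi1 x1 + ereal (1 - t) * gap_nu K f C xi2 x2)
        + (ereal t * gap_mu K xi1 x1 + ereal (1 - t) * gap_mu K xi2 x2)"
      using nu[OF t'] mu[OF t'] by (intro add_mono) (auto simp: gap_mu_def)
    also have "\<dots> = ereal t * (gap_nu K f C xi1 x1 + gap_mu K xi1 x1)
        + ereal (1 - t) * (gap_nu K f C xi2 x2 + gap_mu K xi2 x2)"
      using t' by (simp add: ereal_pos_distrib add_ac)
    finally show "(case t *\<^sub>R u + (1 - t) *\<^sub>R v of (xi, x) \<Rightarrow> gap_nu K f C xi x + gap_mu K xi x)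
        \<le> ereal t * (case u of (xi, x) \<Rightarrow> gap_nu K f C xi x + gap_mu K xi x)
         + ereal (1 - t) * (case v of (xi, x) \<Rightarrow> gap_nu K f C xi x + gap_mu K xi x)"
      using u v by simp
  qed
  have part2: "convex {(xi, x). x \<in> VEP_sol K f C xi}"
  proof (rule convexI)
    fix u v :: "'p \<times> 'n" and s t :: real
    assume uv: "u \<in> {(xi, x). x \<in> VEP_sol K f C xi}" "v \<in> {(xi, x). x \<in> VEP_sol K f C xi}"
      and st: "0 \<le> s" "0 \<le> t" "s + t = 1"
    obtain xi1 x1 where u: "u = (xi1, x1)" by (cases u)
    obtain xi2 x2 where v: "v = (xi2, x2)" by (cases v)
    have s: "t = 1 - s" "s \<le> 1" using st by auto
    have h1: "x1 \<in> K xi1" "\<And>z. z \<in> K xi1 \<Longrightarrow> f xi1 x1 z \<in> C"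
      using uv u by (auto simp: VEP_sol_def)
    have h2: "x2 \<in> K xi2" "\<And>z. z \<in> K xi2 \<Longrightarrow> f xi2 x2 z \<in> C"
      using uv v by (auto simp: VEP_sol_def)
    have "s *\<^sub>R x1 + (1 - s) *\<^sub>R x2 \<in> VEP_sol K f C (s *\<^sub>R xi1 + (1 - s) *\<^sub>R xi2)"
      unfolding VEP_sol_def
    proof (intro CollectI conjI ballI)
      show "s *\<^sub>R x1 + (1 - s) *\<^sub>R x2 \<in> K (s *\<^sub>R xi1 + (1 - s) *\<^sub>R xi2)"
        using Kcomb[OF st(1) s(2) h1(1) h2(1)] .
      fix z assume "z \<in> K (s *\<^sub>R xi1 + (1 - s) *\<^sub>R xi2)"
      then obtain z1 z2 where z: "z1 \<in> K xi1" "z2 \<in> K xi2" "z = s *\<^sub>R z1 + (1 - s) *\<^sub>R z2"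
        using Kdec st(1) s(2) by blast
      define c where "c = f (s *\<^sub>R xi1 + (1 - s) *\<^sub>R xi2) (s *\<^sub>R x1 + (1 - s) *\<^sub>R x2) (s *\<^sub>R z1 + (1 - s) *\<^sub>R z2)
         - s *\<^sub>R f xi1 x1 z1 - (1 - s) *\<^sub>R f xi2 x2 z2"
      note e = fin[OF st(1) s(2) c_def]
      have "s *\<^sub>R f xi1 x1 z1 + (1 - s) *\<^sub>R f xi2 x2 z2 \<in> C"
        using h1(2)[OF z(1)] h2(2)[OF z(2)] st(1) s(2) C_convex by (intro convexD) auto
      then show "f (s *\<^sub>R xi1 + (1 - s) *\<^sub>R xi2) (s *\<^sub>R x1 + (1 - s) *\<^sub>R x2) z \<in> C"
        unfolding z(3) e[THEN conjunct1] using e Cadd by blast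
    qed
    then show "s *\<^sub>R u + t *\<^sub>R v \<in> {(xi, x). x \<in> VEP_sol K f C xi}"
      using u v s by simp
  qed
  show ?thesis using part1 part2 by blast
qed

end
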